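(* Let $G'$ be a finite directed acyclic graph with distinct vertices $s'_1,\dots,s'_n$ (sources, with no incoming edges) and $t'_1,t'_2$ (terminals, with no outgoing edges) such that for every $i\in\{1,\dots,n\}$ and $j\in\{1,2\}$ there is a directed path from $s'_i$ to $t'_j$. Then there exists a subgraph $G^*$ of $G'$ such that (i) for every $i$ and $j$ there is exactly one directed path from $s'_i$ to $t'_j$ in $G^*$, and (ii) $G^*$ is minimal: for every edge $e$ of $G^*$, removing $e$ from $G^*$ leaves some pair $s'_i,t'_j$ with no directed path from $s'_i$ to $t'_j$.
   Context: "Exactly one directed path" means there is a directed path from $s'_i$ to $t'_j$ and no other, distinct, directed path between them (paths are sequences of edges). *)

theory Defs
  imports "Graph_Theory.Graph_Theory"
begin

end

theory Submission
  imports Defs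
begin

definition sg :: "('a,'b) pre_digraph \<Rightarrow> 'b set \<Rightarrow> ('a,'b) pre_digraph" where
  "sg G A = \<lparr>verts = verts G, arcs = A, tail = tail G, head = head G\<rparr>"

lemma cas_sg: "pre_digraph.cas (sg G A) u p v = pre_digraph.cas G u p v"
  by (induction p arbitrary: u) (auto simp: sg_def pre_digraph.cas.simps)

definition Wk :: "('a,'b) pre_digraph \<Rightarrow> 'b set \<Rightarrow> 'a \<Rightarrow> 'b list \<Rightarrow> 'a \<Rightarrow> bool" where
  "Wk G A u p v \<longleftrightarrow> u \<in> verts G \<and> set p \<subseteq> A \<and> pre_digraph.cas G u p v"

lemma awalk_sg: "pre_digraph.awalk (sg G A) u p v = Wk G A u p v"
  by (simp add: pre_digraph.awalk_def cas_sg Wk_def) (simp add: sg_def)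

lemma awalk_Wk: "pre_digraph.awalk G u p v = Wk G (arcs G) u p v"
  by (simp add: pre_digraph.awalk_def Wk_def)

lemma del_arc_sg: "pre_digraph.del_arc (sg G A) e = sg G (A - {e})"
  by (simp add: pre_digraph.del_arc_def sg_def)

lemma Wk_Nil[simp]: "Wk G A u [] v \<longleftrightarrow> u = v \<and> u \<in> verts G"
  by (auto simp: Wk_def pre_digraph.cas.simps)

lemma Wk_mono: "Wk G A u p v \<Longrightarrow> A \<subseteq> B \<Longrightarrow> Wk G B u p v"
  by (auto simp: Wk_def)

locale L2 =
  fixes G :: "('a,'b) pre_digraph" and t :: "nat \<Rightarrow> 'a"
  assumes fin: "fin_digraph G"
    and acyc: "\<forall>p. \<not> pre_digraph.cycle G p"
    and tterm: "\<forall>j\<in>{1..2}. out_arcs G (t j) = {}"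
begin

lemma wf: "wf_digraph G" using fin by (simp add: fin_digraph_def)

lemma Wk_Cons: "A \<subseteq> arcs G \<Longrightarrow> Wk G A u (a#p) v \<longleftrightarrow> a \<in> A \<and> tail G a = u \<and> Wk G A (head G a) p v"
  using wf_digraph.head_in_verts[OF wf] wf_digraph.tail_in_verts[OF wf]
  by (auto simp: Wk_def pre_digraph.cas.simps)

lemma Wk_append: "A \<subseteq> arcs G \<Longrightarrow> Wk G A u p w \<Longrightarrow> Wk G A w q v \<Longrightarrow> Wk G A u (p@q) v"
  by (induction p arbitrary: u) (auto simp: Wk_Cons)

lemma Wk_verts: "A \<subseteq> arcs G \<Longrightarrow> Wk G A u p w \<Longrightarrow> w \<in> verts G"
  by (induction p arbitrary: u) (auto simp: Wk_Cons)

definition Rch where "Rch v w \<longleftrightarrow> (\<exists>p. Wk G (arcs G) v p w)"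
definition RS where "RS v = {j \<in> {1,2}. Rch v (t j)}"
definition Fv where "Fv v \<longleftrightarrow> (\<exists>a. a \<in> arcs G \<and> tail G a = v \<and> RS (head G a) = RS v \<and> RS v \<noteq> {})"
definition fa where "fa v = (SOME a. a \<in> arcs G \<and> tail G a = v \<and> RS (head G a) = RS v \<and> RS v \<noteq> {})"
definition Gv where "Gv v j \<longleftrightarrow> (\<exists>a. a \<in> arcs G \<and> tail G a = v \<and> RS (head G a) = {j})"
definition ga where "ga v j = (SOME a. a \<in> arcs G \<and> tail G a = v \<and> RS (head G a) = {j})"
definition A0 where "A0 = {fa v | v. Fv v} \<union> {ga v j | v j. \<not> Fv v \<and> Gv v j}"

lemma fa_prop: "Fv v \<Longrightarrow> fa v \<in> arcs G \<and> tail G (fa v) = v \<and> RS (head G (fa v)) = RS v \<and> RS v \<noteq> {}"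
  unfolding Fv_def fa_def by (rule someI_ex)

lemma ga_prop: "Gv v j \<Longrightarrow> ga v j \<in> arcs G \<and> tail G (ga v j) = v \<and> RS (head G (ga v j)) = {j}"
  unfolding Gv_def ga_def by (rule someI_ex)

lemma A0_sub: "A0 \<subseteq> arcs G"
  using fa_prop ga_prop by (auto simp: A0_def)

lemma A0_cases: "a \<in> A0 \<Longrightarrow> (Fv (tail G a) \<and> a = fa (tail G a)) \<or>
   (\<exists>j. \<not> Fv (tail G a) \<and> Gv (tail G a) j \<and> a = ga (tail G a) j)"
proof -
  assume "a \<in> A0"
  then consider (f) v where "Fv v" "a = fa v" | (g) v j where "\<not> Fv v" "Gv v j" "a = ga v j"
    unfolding A0_def by blast
  then show ?thesis
  proof cases
    case f
    then have "tail G a = v" using fa_prop[OF f(1)] by simp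
    then show ?thesis using f by simp
  next
    case g
    then have "tail G a = v" using ga_prop[OF g(2)] by simp
    then show ?thesis using g by blast
  qed
qed

lemma K4: "a \<in> A0 \<Longrightarrow> RS (head G a) \<noteq> {}"
proof -
  assume "a \<in> A0"
  from A0_cases[OF this] show ?thesis
  proof
    assume "Fv (tail G a) \<and> a = fa (tail G a)"
    then show ?thesis using fa_prop by metis
  next
    assume "\<exists>j. \<not> Fv (tail G a) \<and> Gv (tail G a) j \<and> a = ga (tail G a) j"
    then show ?thesis using ga_prop by fastforce
  qed
qed

lemma K1:
  assumes "a \<in> A0" "b \<in> A0" "tail G a = tail G b" "j \<in> RS (head G a)" "j \<in> RS (head G b)"
  shows "a = b"
proof -
  let ?v = "tail G a"
  show ?thesis
  proof (cases "Fv ?v")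
    case True
    then have "a = fa ?v" "b = fa ?v" using A0_cases[OF assms(1)] A0_cases[OF assms(2)] assms(3) by auto
    then show ?thesis by simp
  next
    case False
    obtain k1 where a: "Gv ?v k1" "a = ga ?v k1"
      using A0_cases[OF assms(1)] False by blast
    obtain k2 where b: "Gv ?v k2" "b = ga ?v k2"
      using A0_cases[OF assms(2)] False assms(3) by metis
    have "RS (head G a) = {k1}" using ga_prop[OF a(1)] a(2) by simp
    moreover have "RS (head G b) = {k2}" using ga_prop[OF b(1)] b(2) by simp
    ultimately have "k1 = k2" using assms(4,5) by auto
    then show ?thesis using a b by simp
  qed
qed

lemma term_arcs: "j \<in> {1,2} \<Longrightarrow> a \<in> arcs G \<Longrightarrow> tail G a \<noteq> t j"
  using tterm by (auto simp: out_arcs_def)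

lemma Wk_A0: "Wk G A0 v p w \<Longrightarrow> Wk G (arcs G) v p w"
  using A0_sub by (auto simp: Wk_def)

lemma Rch_t: "j \<in> {1,2} \<Longrightarrow> Wk G A0 v p (t j) \<Longrightarrow> j \<in> RS v"
proof -
  assume a: "j \<in> {1,2}" "Wk G A0 v p (t j)"
  then have "Wk G (arcs G) v p (t j)" using Wk_A0 by blast
  then show ?thesis using a unfolding RS_def Rch_def by blast
qed

lemma K2: "j \<in> {1,2} \<Longrightarrow> Wk G A0 v p (t j) \<Longrightarrow> Wk G A0 v q (t j) \<Longrightarrow> p = q"
proof (induction p arbitrary: v q)
  case Nil
  then show ?case using term_arcs A0_sub
    by (cases q) (auto simp: Wk_Cons)
next
  case (Cons a p)
  show ?case
  proof (cases q)
    case Nil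
    then show ?thesis using Cons.prems term_arcs A0_sub by (auto simp: Wk_Cons)
  next
    case (Cons b q')
    have a: "a \<in> A0" "tail G a = v" "Wk G A0 (head G a) p (t j)"
      using \<open>Wk G A0 v (a#p) (t j)\<close> A0_sub by (auto simp: Wk_Cons)
    have b: "b \<in> A0" "tail G b = v" "Wk G A0 (head G b) q' (t j)"
      using \<open>Wk G A0 v q (t j)\<close> Cons A0_sub by (auto simp: Wk_Cons)
    have "a = b" using K1[OF a(1) b(1)] a b Rch_t[OF \<open>j \<in> {1,2}\<close>] by auto
    then show ?thesis using Cons.IH[OF \<open>j \<in> {1,2}\<close> a(3)] b(3) Cons by simp
  qed
qed

lemma no_back: "a \<in> arcs G \<Longrightarrow> \<not> Rch (head G a) (tail G a)"
proof
  assume a: "a \<in> arcs G" and "Rch (head G a) (tail G a)"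
  then obtain p where "Wk G (arcs G) (head G a) p (tail G a)" by (auto simp: Rch_def)
  then have "Wk G (arcs G) (tail G a) (a#p) (tail G a)" using a by (simp add: Wk_Cons)
  then have "wf_digraph.closed_w G (a#p)"
    by (auto simp: wf_digraph.closed_w_def[OF wf] awalk_Wk)
  then show False using wf_digraph.closed_w_imp_cycle[OF wf] acyc by blast
qed

lemma Rch_fin: "finite {w. Rch v w}"
proof -
  have "{w. Rch v w} \<subseteq> verts G" using Wk_verts by (auto simp: Rch_def)
  then show ?thesis using fin_digraph.finite_verts[OF fin] finite_subset by blast
qed

lemma card_less: "a \<in> arcs G \<Longrightarrow> card {w. Rch (head G a) w} < card {w. Rch (tail G a) w}"
proof (rule psubset_card_mono[OF Rch_fin])
  assume a: "a \<in> arcs G"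
  have "{w. Rch (head G a) w} \<subseteq> {w. Rch (tail G a) w}"
  proof
    fix w assume "w \<in> {w. Rch (head G a) w}"
    then obtain p where "Wk G (arcs G) (head G a) p w" by (auto simp: Rch_def)
    then have "Wk G (arcs G) (tail G a) (a#p) w" using a by (simp add: Wk_Cons)
    then show "w \<in> {w. Rch (tail G a) w}" by (auto simp: Rch_def)
  qed
  moreover have "Rch (tail G a) (tail G a)"
    using a wf_digraph.tail_in_verts[OF wf] unfolding Rch_def by (metis Wk_Nil)
  ultimately show "{w. Rch (head G a) w} \<subset> {w. Rch (tail G a) w}"
    using no_back[OF a] by blast
qed

lemma RS_sub: "a \<in> arcs G \<Longrightarrow> RS (head G a) \<subseteq> RS (tail G a)"
proof
  fix j assume a: "a \<in> arcs G" and "j \<in> RS (head G a)"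
  then obtain p where "j \<in> {1,2}" "Wk G (arcs G) (head G a) p (t j)" by (auto simp: RS_def Rch_def)
  then have "Wk G (arcs G) (tail G a) (a#p) (t j)" using a by (simp add: Wk_Cons)
  then show "j \<in> RS (tail G a)" using \<open>j \<in> {1,2}\<close> by (auto simp: RS_def Rch_def)
qed

lemma K3: "v \<in> verts G \<Longrightarrow> j \<in> RS v \<Longrightarrow> \<exists>p. Wk G A0 v p (t j)"
proof (induction "card {w. Rch v w}" arbitrary: v rule: less_induct)
  case less
  have j: "j \<in> {1,2}" using less.prems by (auto simp: RS_def)
  show ?case
  proof (cases "v = t j")
    case True
    then show ?thesis using less.prems by (intro exI[of _ "[]"]) simp
  next
    case False
    obtain p where p: "Wk G (arcs G) v p (t j)" using less.prems by (auto simp: RS_def Rch_def)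
    then obtain a p' where ap: "p = a # p'" using False by (cases p) auto
    have a: "a \<in> arcs G" "tail G a = v" "Wk G (arcs G) (head G a) p' (t j)"
      using p ap by (auto simp: Wk_Cons)
    have ja: "j \<in> RS (head G a)" using a(3) j by (auto simp: RS_def Rch_def)
    obtain b where b: "b \<in> A0" "tail G b = v" "j \<in> RS (head G b)"
    proof (cases "Fv v")
      case True
      then show ?thesis using that[of "fa v"] fa_prop[OF True] less.prems(2)
        unfolding A0_def by blast
    next
      case False
      have sub: "RS (head G a) \<subseteq> RS v" using RS_sub[OF a(1)] a(2) by simp
      have ne: "RS (head G a) \<noteq> RS v" using False a ja unfolding Fv_def by blast
      have rs: "RS (head G a) \<subseteq> {1,2}" by (auto simp: RS_def)
      have "RS (head G a) = {j}"
      proof (rule ccontr)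
        assume "RS (head G a) \<noteq> {j}"
        then have "RS (head G a) = {1,2}" using rs ja j by auto
        then show False using sub ne rs less.prems(2) by (auto simp: RS_def)
      qed
      then have g: "Gv v j" using a unfolding Gv_def by blast
      then show ?thesis using that[of "ga v j"] ga_prop[OF g] False unfolding A0_def by blast
    qed
    have barc: "b \<in> arcs G" using b(1) A0_sub by auto
    have "card {w. Rch (head G b) w} < card {w. Rch v w}" using card_less[OF barc] b(2) by simp
    then obtain q where "Wk G A0 (head G b) q (t j)"
      using less.hyps b(3) wf_digraph.head_in_verts[OF wf barc] by blast
    then have "Wk G A0 v (b#q) (t j)" using b A0_sub by (simp add: Wk_Cons)
    then show ?thesis by blast
  qed
qed

definition AH where "AH S = {a \<in> A0. \<exists>x\<in>S. \<exists>q. Wk G A0 x q (tail G a)}"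

lemma AH_sub: "AH S \<subseteq> A0" by (auto simp: AH_def)

lemma ext: "Wk G A0 u p w \<Longrightarrow> x \<in> S \<Longrightarrow> Wk G A0 x q u \<Longrightarrow> Wk G (AH S) u p w"
proof (induction p arbitrary: u q)
  case Nil
  then show ?case using Wk_verts[OF A0_sub] by auto
next
  case (Cons a p)
  have a: "a \<in> A0" "tail G a = u" "Wk G A0 (head G a) p w"
    using Cons.prems A0_sub by (auto simp: Wk_Cons)
  have aH: "a \<in> AH S" using a Cons.prems unfolding AH_def by blast
  have "Wk G A0 u [a] (head G a)"
    using a A0_sub wf_digraph.head_in_verts[OF wf] by (auto simp: Wk_Cons)
  then have "Wk G A0 x (q @ [a]) (head G a)"
    using Wk_append[OF A0_sub Cons.prems(3)] by blast
  then have "Wk G (AH S) (head G a) p w" using Cons.IH[OF a(3) Cons.prems(2)] by blast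
  then show ?case using aH a by (simp add: Wk_Cons[OF order_trans[OF AH_sub A0_sub]])
qed

end

theorem lemma2:
  fixes G :: "('a, 'b) pre_digraph"
    and n :: nat
    and s :: "nat \<Rightarrow> 'a"
    and t :: "nat \<Rightarrow> 'a"
  assumes fin: "fin_digraph G"
    and acyclic: "\<forall>p. \<not> pre_digraph.cycle G p"
    and s_verts: "\<forall>i\<in>{1..n}. s i \<in> verts G"
    and t_verts: "\<forall>j\<in>{1..2}. t j \<in> verts G"
    and s_inj: "inj_on s {1..n}"
    and t_distinct: "t 1 \<noteq> t 2"
    and s_t_distinct: "\<forall>i\<in>{1..n}. \<forall>j\<in>{1..2}. s i \<noteq> t j"
    and s_sources: "\<forall>i\<in>{1..n}. in_arcs G (s i) = {}"
    and t_terminals: "\<forall>j\<in>{1..2}. out_arcs G (t j) = {}"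
    and reach: "\<forall>i\<in>{1..n}. \<forall>j\<in>{1..2}. \<exists>p. pre_digraph.apath G (s i) p (t j)"
  shows "\<exists>H. subgraph H G
           \<and> (\<forall>i\<in>{1..n}. \<forall>j\<in>{1..2}. \<exists>!p. pre_digraph.apath H (s i) p (t j))
           \<and> (\<forall>e\<in>arcs H. \<exists>i\<in>{1..n}. \<exists>j\<in>{1..2}.
                 \<not> (\<exists>p. pre_digraph.apath (pre_digraph.del_arc H e) (s i) p (t j)))"
proof -
  have "L2 G t" using fin acyclic t_terminals by (simp add: L2_def)
  then interpret L: L2 G t .
  define S where "S = s ` {1..n}"
  define H where "H = sg G (L.AH S)"
  have wf: "wf_digraph G" by (rule L.wf)
  have Hsub: "L.AH S \<subseteq> arcs G" using L.AH_sub L.A0_sub by blast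
  have wfH: "wf_digraph H"
  proof (rule wf_digraph.intro)
    fix e assume "e \<in> arcs H"
    then have "e \<in> arcs G" using Hsub by (simp add: H_def sg_def) blast
    then show "tail H e \<in> verts H" "head H e \<in> verts H"
      using wf_digraph.tail_in_verts[OF wf] wf_digraph.head_in_verts[OF wf] by (simp_all add: H_def sg_def)
  qed
  have sub: "subgraph H G"
    unfolding subgraph_def compatible_def using wf wfH Hsub by (simp add: H_def sg_def)
  have RSs: "j \<in> L.RS (s i)" if "i \<in> {1..n}" "j \<in> {1..2}" for i j
  proof -
    have "\<exists>p. pre_digraph.apath G (s i) p (t j)" using bspec[OF bspec[OF reach that(1)] that(2)] .
    then obtain p where "pre_digraph.apath G (s i) p (t j)" ..
    then have "Wk G (arcs G) (s i) p (t j)" by (simp add: pre_digraph.apath_def awalk_Wk)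
    moreover have "j \<in> {1,2}" using that(2) by auto
    ultimately show ?thesis unfolding L.RS_def L.Rch_def by blast
  qed
  have uniq: "p = q" if "j \<in> {1..2}" "Wk G A u p (t j)" "Wk G B u q (t j)"
    "A \<subseteq> L.A0" "B \<subseteq> L.A0" for j A B u p q
  proof -
    have "Wk G L.A0 u p (t j)" using Wk_mono[OF that(2,4)] .
    moreover have "Wk G L.A0 u q (t j)" using Wk_mono[OF that(3,5)] .
    moreover have "j \<in> {1,2}" using that(1) by auto
    ultimately show ?thesis using L.K2[of j u p q] by blast
  qed
  have part2: "\<exists>!p. pre_digraph.apath H (s i) p (t j)" if ij: "i \<in> {1..n}" "j \<in> {1..2}" for i j
  proof -
    have sv: "s i \<in> verts G" using bspec[OF s_verts ij(1)] .
    obtain w where w: "Wk G L.A0 (s i) w (t j)" using L.K3[OF sv RSs[OF ij]] ..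
    have sS: "s i \<in> S" using ij(1) by (simp add: S_def)
    have w0: "Wk G L.A0 (s i) [] (s i)" using sv by simp
    have "Wk G (L.AH S) (s i) w (t j)" using L.ext[OF w sS w0] .
    then have ex: "pre_digraph.apath H (s i) (wf_digraph.awalk_to_apath H w) (t j)"
      by (intro wf_digraph.apath_awalk_to_apath[OF wfH]) (simp add: H_def awalk_sg)
    show ?thesis
    proof (rule ex1I[where P="\<lambda>p. pre_digraph.apath H (s i) p (t j)", OF ex])
      fix p assume "pre_digraph.apath H (s i) p (t j)"
      then have c1: "Wk G (L.AH S) (s i) p (t j)" by (simp add: pre_digraph.apath_def H_def awalk_sg)
      have c2: "Wk G (L.AH S) (s i) (wf_digraph.awalk_to_apath H w) (t j)"
        using ex by (simp add: pre_digraph.apath_def H_def awalk_sg)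
      show "p = wf_digraph.awalk_to_apath H w"
        using uniq[OF ij(2) c1 c2 L.AH_sub L.AH_sub] .
    qed
  qed
  have part3: "\<exists>i\<in>{1..n}. \<exists>j\<in>{1..2}.
                 \<not> (\<exists>p. pre_digraph.apath (pre_digraph.del_arc H e) (s i) p (t j))"
    if e: "e \<in> arcs H" for e
  proof -
    have eA: "e \<in> L.AH S" using e by (simp add: H_def sg_def)
    then have "\<exists>x\<in>S. \<exists>q. Wk G L.A0 x q (tail G e)" unfolding L.AH_def by simp
    then obtain x q where xS: "x \<in> S" and q: "Wk G L.A0 x q (tail G e)" by blast
    from xS obtain i where i: "i \<in> {1..n}" and xi: "x = s i" unfolding S_def by blast
    have e0: "e \<in> L.A0" using eA L.AH_sub by blast
    have "L.RS (head G e) \<noteq> {}" using L.K4[OF e0] .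
    then obtain j where j: "j \<in> L.RS (head G e)" by blast
    have j2: "j \<in> {1..2}" using j by (auto simp: L.RS_def)
    have eG: "e \<in> arcs G" using e0 L.A0_sub by blast
    obtain r where r: "Wk G L.A0 (head G e) r (t j)"
      using L.K3[OF wf_digraph.head_in_verts[OF wf eG] j] ..
    have er: "Wk G L.A0 (tail G e) (e # r) (t j)"
      using r e0 by (simp add: L.Wk_Cons[OF L.A0_sub])
    have W: "Wk G L.A0 (s i) (q @ e # r) (t j)"
      using L.Wk_append[OF L.A0_sub q er] xi by simp
    have "\<not> (\<exists>p. pre_digraph.apath (pre_digraph.del_arc H e) (s i) p (t j))"
    proof
      assume "\<exists>p. pre_digraph.apath (pre_digraph.del_arc H e) (s i) p (t j)"
      then obtain p where "pre_digraph.apath (pre_digraph.del_arc H e) (s i) p (t j)" ..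
      then have p: "Wk G (L.AH S - {e}) (s i) p (t j)"
        by (simp add: pre_digraph.apath_def H_def del_arc_sg awalk_sg)
      have sub1: "L.AH S - {e} \<subseteq> L.A0" using L.AH_sub by blast
      have "p = q @ e # r" using uniq[OF j2 p W sub1 order_refl] .
      then show False using p by (auto simp: Wk_def)
    qed
    then show ?thesis using i j2 by blast
  qed
  show ?thesis using sub part2 part3 by blast
qed

end
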